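(* Let $n\ge3$ and $c>0$. Then $\gamma$ is a $C^2$ function on $[0,\infty)$, and for all $x\ge0$: (i) $2x\gamma''(x)+\gamma'(x)\le\frac{3}{n+2}$, with equality if and only if $x=x_0$; (ii) $(\gamma(x)+nc)\,x\,\gamma'(x)\ge 2cx+\gamma(x)^2-nc\,\gamma(x)$, with equality if and only if $x\ge x_0$; (iii) $\gamma(x)>x\gamma'(x)$; (iv) $\gamma(x)=\min\{\alpha(x),\beta(x)\}$; (v) $\frac{x}{n-1}+2c<\gamma(x)<\frac{x}{n-1}+nc$; (vi) $\frac{n-2}{\sqrt{n(n-1)}}\sqrt{x\left(\gamma(x)-\frac1n x\right)}+\gamma(x)\le\frac2n x+nc$.
   Context: Definition of $\gamma$: For $n\ge 3$, $c>0$ and $x\ge 0$ put $\alpha(x)=nc+\frac{n}{2(n-1)}x-\frac{n-2}{2(n-1)}\sqrt{x^2+4(n-1)cx}$, $y_n=4(1-n)+\frac{2(n^2-4)}{\sqrt{2n-5}}\cos\!\left(\frac13\arctan\frac{n^2-4n+6}{2(n-1)\sqrt{2n-5}}\right)$, $x_0=y_nc$, $\beta(x)=\alpha(x_0)+\alpha'(x_0)(x-x_0)+\frac12\alpha''(x_0)(x-x_0)^2$, and $\gamma(x)=\alpha(x)$ for $x\ge x_0$, $\gamma(x)=\beta(x)$ for $0\le x<x_0$. *)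

theory Defs
  imports "HOL-Analysis.Analysis"
begin

definition alpha :: "nat \<Rightarrow> real \<Rightarrow> real \<Rightarrow> real" where
  "alpha n c x = real n * c + real n / (2 * (real n - 1)) * x
     - (real n - 2) / (2 * (real n - 1)) * sqrt (x\<^sup>2 + 4 * (real n - 1) * c * x)"

definition y_n :: "nat \<Rightarrow> real" where
  "y_n n = 4 * (1 - real n) + 2 * ((real n)\<^sup>2 - 4) / sqrt (2 * real n - 5)
     * cos (1/3 * arctan (((real n)\<^sup>2 - 4 * real n + 6) / (2 * (real n - 1) * sqrt (2 * real n - 5))))"

definition x0 :: "nat \<Rightarrow> real \<Rightarrow> real" where
  "x0 n c = y_n n * c"

definition beta :: "nat \<Rightarrow> real \<Rightarrow> real \<Rightarrow> real" where
  "beta n c x = alpha n c (x0 n c) + deriv (alpha n c) (x0 n c) * (x - x0 n c)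
     + 1/2 * deriv (deriv (alpha n c)) (x0 n c) * (x - x0 n c)\<^sup>2"

definition gamma :: "nat \<Rightarrow> real \<Rightarrow> real \<Rightarrow> real" where
  "gamma n c x = (if x \<ge> x0 n c then alpha n c x else beta n c x)"

end

theory Submission
  imports Defs
begin


definition Sf :: "nat \<Rightarrow> real \<Rightarrow> real \<Rightarrow> real" where
  "Sf n c x = sqrt (x^2 + 4*(real n - 1)*c*x)"
definition a1f :: "nat \<Rightarrow> real \<Rightarrow> real \<Rightarrow> real" where
  "a1f n c x = real n/(2*(real n-1)) - (real n-2)/(2*(real n-1)) * (x + 2*(real n-1)*c)/Sf n c x"
definition a2f :: "nat \<Rightarrow> real \<Rightarrow> real \<Rightarrow> real" where
  "a2f n c x = 2*(real n-2)*(real n-1)*c^2/(Sf n c x)^3"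

lemma Sf_facts:
  assumes "n \<ge> 3" "c > 0" "x > 0"
  shows "Sf n c x > 0" "(Sf n c x)^2 = x^2 + 4*(real n - 1)*c*x"
    "x < Sf n c x" "Sf n c x < x + 2*(real n - 1)*c"
proof -
  have N: "real n \<ge> 3" using assms by simp
  have p: "x^2 + 4*(real n - 1)*c*x > 0" using assms N by (simp add: add_pos_pos)
  show "Sf n c x > 0" unfolding Sf_def using p by simp
  show S2: "(Sf n c x)^2 = x^2 + 4*(real n - 1)*c*x" unfolding Sf_def using p by simp
  show "x < Sf n c x" unfolding Sf_def using assms N
    by (intro real_less_rsqrt) (simp add: add_pos_pos)
  have mc: "(real n - 1)*c > 0" using assms N by simp
  have "(x + 2*(real n - 1)*c)^2 = x^2 + 4*(real n - 1)*c*x + 4*((real n - 1)*c)^2"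
    by (simp add: power2_eq_square algebra_simps)
  hence lt: "x^2 + 4*(real n - 1)*c*x < (x + 2*(real n - 1)*c)^2" using mc assms by simp
  have y0: "0 \<le> x + 2*(real n - 1)*c" using mc assms by simp
  show "Sf n c x < x + 2*(real n - 1)*c" unfolding Sf_def
    by (rule real_less_lsqrt[OF y0 lt])
qed

lemma Sf_deriv:
  assumes "n \<ge> 3" "c > 0" "x > 0"
  shows "(Sf n c has_real_derivative (x + 2*(real n - 1)*c) / Sf n c x) (at x)"
proof -
  have p: "x^2 + 4*(real n - 1)*c*x > 0" using assms by (simp add: add_pos_pos)
  have d1: "((\<lambda>x. x^2 + 4*(real n - 1)*c*x) has_real_derivative 2*x + 4*(real n - 1)*c) (at x)"
    by (auto intro!: derivative_eq_intros)
  have "((\<lambda>x. sqrt (x^2 + 4*(real n - 1)*c*x)) has_real_derivative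
      inverse (sqrt (x^2 + 4*(real n - 1)*c*x)) / 2 * (2*x + 4*(real n - 1)*c)) (at x)"
    by (rule DERIV_chain2[OF DERIV_real_sqrt[OF p] d1])
  moreover have "inverse (sqrt (x^2 + 4*(real n - 1)*c*x)) / 2 * (2*x + 4*(real n - 1)*c)
     = (x + 2*(real n - 1)*c) / sqrt (x^2 + 4*(real n - 1)*c*x)"
    using p by (simp add: field_simps)
  ultimately show ?thesis unfolding Sf_def[abs_def] by (rule DERIV_cong)
qed

lemma alpha_deriv:
  assumes "n \<ge> 3" "c > 0" "x > 0"
  shows "(alpha n c has_real_derivative a1f n c x) (at x)"
proof -
  have e: "alpha n c = (\<lambda>x. real n * c + real n / (2 * (real n - 1)) * x - (real n - 2) / (2 * (real n - 1)) * Sf n c x)"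
    unfolding alpha_def[abs_def] Sf_def by simp
  show ?thesis unfolding e
    by (rule derivative_eq_intros Sf_deriv[OF assms] refl | simp)+ (simp add: a1f_def mult_ac)
qed

lemma a1f_deriv:
  assumes "n \<ge> 3" "c > 0" "x > 0"
  shows "(a1f n c has_real_derivative a2f n c x) (at x)"
proof -
  define S where "S = Sf n c x"
  define m where "m = real n - 1"
  have S: "S > 0" "S^2 = x^2 + 4*m*c*x" using Sf_facts assms unfolding S_def m_def by auto
  have m: "m \<noteq> 0" using assms unfolding m_def by auto
  have Sn: "Sf n c x \<noteq> 0" using S(1) unfolding S_def by simp
  have q: "((\<lambda>x. (x + 2*m*c) / Sf n c x) has_real_derivative
      (1 * S - (x + 2*m*c) * ((x + 2*m*c) / S)) / (S * S)) (at x)"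
    unfolding S_def
    by (rule DERIV_divide) (auto intro!: derivative_eq_intros Sf_deriv[OF assms, unfolded m_def[symmetric]] simp: Sn)
  have e: "a1f n c = (\<lambda>x. real n/(2*m) - (real n-2)/(2*m) * ((x + 2*m*c) / Sf n c x))"
    unfolding a1f_def[abs_def] m_def by simp
  have v: "0 - (real n-2)/(2*m) * ((1 * S - (x + 2*m*c) * ((x + 2*m*c) / S)) / (S * S)) = a2f n c x"
  proof -
    have "a2f n c x = 2*(real n-2)*m*c^2/(S*S^2)" unfolding a2f_def S_def m_def
      by (simp add: power3_eq_cube power2_eq_square)
    also have "\<dots> = 2*(real n-2)*m*c^2/(S*(x^2 + 4*m*c*x))" using S by simp
    finally have a: "a2f n c x = 2*(real n-2)*m*c^2/(S*(x^2 + 4*m*c*x))" .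
    have p: "x^2 + 4*m*c*x \<noteq> 0" using S by (metis less_irrefl zero_less_power)
    show ?thesis unfolding a using S(1) m p S(2)[symmetric]
      apply (simp add: field_simps power2_eq_square)
      using S(2) by algebra
  qed
  show ?thesis unfolding e
    by (rule DERIV_cong[OF _ v]) (intro derivative_intros DERIV_cmult q)
qed

lemma deriv_alpha:
  assumes "n \<ge> 3" "c > 0" "x > 0"
  shows "deriv (alpha n c) x = a1f n c x" "deriv (deriv (alpha n c)) x = a2f n c x"
proof -
  show "deriv (alpha n c) x = a1f n c x" using alpha_deriv[OF assms] by (rule DERIV_imp_deriv)
  have "(deriv (alpha n c) has_real_derivative a2f n c x) (at x)"
    apply (rule has_field_derivative_transform_within_open[of "a1f n c" _ _ "{0<..}"])
    using a1f_deriv[OF assms] assms apply auto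
    using alpha_deriv assms by (metis DERIV_imp_deriv)
  thus "deriv (deriv (alpha n c)) x = a2f n c x" by (rule DERIV_imp_deriv)
qed



lemma sin_triple: "sin (3 * x) = 3 * sin x - 4 * sin (x::real) ^ 3"
proof -
  have "sin (3*x) = sin (2*x + x)" by simp
  also have "\<dots> = sin (2*x) * cos x + cos (2*x) * sin x" by (rule sin_add)
  also have "\<dots> = 2 * sin x * cos x ^ 2 + (1 - 2 * sin x ^ 2) * sin x"
    by (simp add: sin_double cos_double_sin power2_eq_square)
  also have "\<dots> = 3 * sin x - 4 * sin x ^ 3"
    using sin_cos_squared_add[of x] by algebra
  finally show ?thesis .
qed

lemma yn_props:
  assumes n3: "n \<ge> 3"
  defines "N \<equiv> real n"
  shows "y_n n > 0 \<and> sqrt (y_n n / (y_n n + 4*(N - 1))) * (3 - y_n n / (y_n n + 4*(N - 1)))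
           = 2 * ((N^2 - 4*N + 6)/(N^2 - 4))"
proof -
  have N3: "N \<ge> 3" using n3 unfolding N_def by simp
  define w where "w = sqrt (2*N - 5)"
  have w0: "w > 0" unfolding w_def using N3 by simp
  have w2: "w^2 = 2*N - 5" unfolding w_def using N3 by simp
  define T where "T = (N^2 - 4*N + 6) / (2*(N - 1)*w)"
  have num0: "N^2 - 4*N + 6 > 0"
  proof -
    have "N^2 - 4*N + 6 = (N-2)^2 + 2" by (simp add: power2_eq_square algebra_simps)
    thus ?thesis by (smt (verit) zero_le_power2)
  qed
  have T0: "T > 0" unfolding T_def using w0 N3 num0
    by (intro divide_pos_pos) auto
  have D0: "N^2 - 4 > 0"
  proof -
    have "N^2 - 4 = (N-2)*(N+2)" by (simp add: power2_eq_square algebra_simps)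
    thus ?thesis using N3 by simp
  qed
  have "1 + T^2 = ((N^2 - 4) / (2*(N-1)*w))^2"
    unfolding T_def using w0 N3 w2
    apply (simp add: power_divide field_simps) by algebra
  hence sq: "sqrt (1 + T^2) = (N^2 - 4) / (2*(N-1)*w)"
    using D0 w0 N3 by simp
  define th where "th = arctan T"
  have cth: "cos th = 2*(N-1)*w / (N^2-4)" unfolding th_def cos_arctan sq by simp
  have sth: "sin th = (N^2 - 4*N + 6)/(N^2 - 4)"
  proof -
    have "sin th = T * ((2*(N-1)*w) / (N^2 - 4))" unfolding th_def sin_arctan sq by simp
    also have "\<dots> = (N^2 - 4*N + 6)/(N^2 - 4)" unfolding T_def
      using w0 N3 D0 by (simp add: divide_simps)
    finally show ?thesis .
  qed
  have th0: "0 < th" unfolding th_def using T0 by (simp add: arctan_less_iff[of 0, simplified])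
  have th1: "th < pi/2" unfolding th_def by (rule arctan_ubound)
  define ph where "ph = th / 3"
  have thph: "th = 3 * ph" unfolding ph_def by simp
  define C where "C = cos ph"
  have ct: "cos th = 4*C^3 - 3*C" unfolding C_def thph by (rule cos_treble_cos)
  have cpos: "cos th > 0" using cth w0 N3 D0 by simp
  have Cgt: "C > cos th" unfolding C_def
    using th0 th1 unfolding ph_def by (intro cos_monotone_0_pi) auto
  have yeq: "y_n n = 4*(N-1) * (C / cos th - 1)"
    unfolding y_n_def N_def[symmetric] w_def[symmetric] T_def[symmetric] th_def[symmetric] C_def ph_def
    unfolding cth using w0 N3 D0
    by (simp add: field_simps C_def ph_def)
  have "C / cos th - 1 > 0" using Cgt cpos by (simp add: field_simps)
  hence ypos: "y_n n > 0" unfolding yeq using N3 by simp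
  have Qeq: "y_n n / (y_n n + 4*(N - 1)) = 1 - cos th / C"
    unfolding yeq using Cgt cpos N3 by (simp add: field_simps)
  also have "\<dots> = 4 * (sin ph)^2"
    unfolding ct using Cgt cpos sin_cos_squared_add[of ph] unfolding C_def[symmetric]
    apply (simp add: field_simps power2_eq_square power3_eq_cube) by algebra
  finally have Q: "y_n n / (y_n n + 4*(N - 1)) = 4 * (sin ph)^2" .
  have sp: "sin ph > 0" unfolding ph_def using th0 th1
    by (intro sin_gt_zero) auto
  have "sqrt (4 * (sin ph)^2) = 2 * sin ph" using sp by (simp add: real_sqrt_mult)
  hence "sqrt (y_n n / (y_n n + 4*(N - 1))) * (3 - y_n n / (y_n n + 4*(N - 1)))
     = 2 * (3 * sin ph - 4 * sin ph ^ 3)" unfolding Q by (simp add: algebra_simps power2_eq_square power3_eq_cube)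
  also have "\<dots> = 2 * sin th" unfolding thph sin_triple ..
  finally show ?thesis using ypos sth by simp
qed




lemma idents:
  fixes N c x S :: real
  assumes N: "N > 2" and S: "S > 0" and S2: "S^2 = x^2 + 4*(N-1)*c*x"
  defines "al \<equiv> N*c + N/(2*(N-1))*x - (N-2)/(2*(N-1))*S"
      and "a1 \<equiv> N/(2*(N-1)) - (N-2)/(2*(N-1)) * (x + 2*(N-1)*c)/S"
      and "a2 \<equiv> 2*(N-2)*(N-1)*c^2/S^3"
      and "K \<equiv> (N-2)^2/(N*(N-1))"
  shows "(al + N*c)*x*a1 = 2*c*x + al^2 - N*c*al"
    and "x*a1^2 + (al+N*c)*x*a2 + 2*N*c*a1 - al*a1 - 2*c = 0"
    and "(2*x/N + N*c - al)^2 = K*x*(al - x/N)"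
    and "2*(2*x/N + N*c - al)*(2/N - a1) = K*((al - x/N) + x*(a1 - 1/N))"
    and "(2/N - a1)^2 - a2*(2*x/N + N*c - al) = K*((a1 - 1/N) + x*a2/2)"
proof -
  define m where "m = N - 1"
  have m0: "m \<noteq> 0" "N \<noteq> 0" "S \<noteq> 0" using N S unfolding m_def by auto
  have Nm: "N = m + 1" unfolding m_def by simp
  have S2': "S^2 = x^2 + 4*m*c*x" using S2 unfolding m_def .
  have e1: "al = N*c + N/(2*m)*x - (N-2)/(2*m)*S" unfolding al_def m_def ..
  have e2: "a1 = N/(2*m) - (N-2)/(2*m) * (x + 2*m*c)/S" unfolding a1_def m_def ..
  have e3: "a2 = 2*(N-2)*m*c^2/S^3" unfolding a2_def m_def ..
  have e4: "K = (N-2)^2/(N*m)" unfolding K_def m_def ..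
  show "(al + N*c)*x*a1 = 2*c*x + al^2 - N*c*al"
    unfolding e1 e2 using m0
    apply (simp add: field_simps power2_eq_square)
    using S2' Nm by (simp add: power2_eq_square) algebra
  show "x*a1^2 + (al+N*c)*x*a2 + 2*N*c*a1 - al*a1 - 2*c = 0"
    unfolding e1 e2 e3 using m0
    apply (simp add: field_simps power2_eq_square power3_eq_cube)
    using S2' Nm by (simp add: power2_eq_square) algebra
  show "(2*x/N + N*c - al)^2 = K*x*(al - x/N)"
    unfolding e1 e4 using m0
    apply (simp add: field_simps power2_eq_square)
    using S2' Nm by (simp add: power2_eq_square) algebra
  show "2*(2*x/N + N*c - al)*(2/N - a1) = K*((al - x/N) + x*(a1 - 1/N))"
    unfolding e1 e2 e4 using m0
    apply (simp add: field_simps power2_eq_square)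
    using S2' Nm by algebra
  define z where "z = x/S"
  define b where "b = 2*m*c/S"
  define \<rho> where "\<rho> = (N-2)/N"
  define k where "k = (N-2)/(2*m)"
  have kr: "k*(1+\<rho>) = \<rho>" unfolding k_def \<rho>_def m_def using m0 by (simp add: field_simps m_def)
  have r1: "1 + \<rho> \<noteq> 0" unfolding \<rho>_def using N by (simp add: field_simps)
  define q where "q = 1 + \<rho>"
  have q0: "q \<noteq> 0" using r1 unfolding q_def .
  have rq: "\<rho> = q - 1" unfolding q_def by simp
  have kk: "k = \<rho>/q" using kr r1 unfolding q_def by (simp add: field_simps)
  have rel: "z^2 + 2*z*b = 1"
  proof -
    have "S^2 * (z^2 + 2*z*b) = x^2 + 4*m*c*x" unfolding z_def b_def using m0
      by (simp add: field_simps power2_eq_square)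
    hence "S^2 * (z^2 + 2*z*b) = S^2" using S2' by simp
    thus ?thesis using m0 by simp
  qed
  have c1: "2/N - N/(2*m) = -(k*\<rho>)" unfolding k_def \<rho>_def m_def using m0 unfolding m_def
    by (simp add: field_simps)
  have c2: "(x + 2*m*c)/S = z + b" unfolding z_def b_def by (simp add: add_divide_distrib)
  have zS: "z*S = x" unfolding z_def using m0 by simp
  have g0': "2*x/N + N*c - al = k*(S - \<rho>*z*S)"
  proof -
    have "2*x/N + N*c - al = (2/N - N/(2*m))*x + k*S" unfolding e1 k_def by (simp add: algebra_simps)
    have zz: "\<rho>*z*S = \<rho>*x" using zS by (simp add: mult.assoc)
    show ?thesis unfolding zz using \<open>2*x/N + N*c - al = (2/N - N/(2*m))*x + k*S\<close> unfolding c1 by (simp add: algebra_simps)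
  qed
  have g1': "2/N - a1 = k*(z + b - \<rho>)"
  proof -
    have "2/N - a1 = (2/N - N/(2*m)) + k*((x + 2*m*c)/S)" unfolding e2 k_def by (simp add: algebra_simps)
    thus ?thesis unfolding c1 c2 by (simp add: algebra_simps)
  qed
  have a2': "a2 = k*b^2/S" unfolding e3 k_def b_def using m0
    by (simp add: field_simps power2_eq_square power3_eq_cube)
  have K': "K = 2*k*\<rho>" unfolding e4 k_def \<rho>_def using m0 by (simp add: field_simps power2_eq_square)
  have a1': "a1 - 1/N = (1-\<rho>)/2 - k*(z + b - \<rho>)" using g1' unfolding \<rho>_def using m0 by (simp add: field_simps)
  have xa2: "x*a2/2 = k*b^2*z/2" unfolding a2' z_def using m0 by simp
  show "(2/N - a1)^2 - a2*(2*x/N + N*c - al) = K*((a1 - 1/N) + x*a2/2)"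
    unfolding xa2 g1' a2' g0' K' a1' kk unfolding rq using m0 q0
    apply (simp add: field_simps power2_eq_square)
    using rel zS by algebra
qed


lemma idents2:
  fixes N c x S :: real
  assumes N: "N > 2" and S: "S > 0" and S2: "S^2 = x^2 + 4*(N-1)*c*x"
  defines "al \<equiv> N*c + N/(2*(N-1))*x - (N-2)/(2*(N-1))*S"
      and "a1 \<equiv> N/(2*(N-1)) - (N-2)/(2*(N-1)) * (x + 2*(N-1)*c)/S"
      and "a2 \<equiv> 2*(N-2)*(N-1)*c^2/S^3"
  shows "2*x*a2 + a1 = N/(2*(N-1)) - (N-2)/(2*(N-1)) * ((x/S)*(3 - (x/S)^2)/2)"
    and "al - x*a1 = N*c - (N-2)*c*x/S"
    and "2*x/N + N*c - al = (N-2)/(2*(N-1))*(S - (N-2)/N*x)"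
    and "a2*x^2/2 = (N-2)*c*x/S * ((N-1)*c*x/S^2)"
proof -
  define m where "m = N - 1"
  have m0: "m \<noteq> 0" "N \<noteq> 0" "S \<noteq> 0" using N S unfolding m_def by auto
  have S2': "S^2 = x^2 + 4*m*c*x" using S2 unfolding m_def .
  have e1: "al = N*c + N/(2*m)*x - (N-2)/(2*m)*S" unfolding al_def m_def ..
  have e2: "a1 = N/(2*m) - (N-2)/(2*m) * (x + 2*m*c)/S" unfolding a1_def m_def ..
  have Q0: "x^2 + 4*m*c*x \<noteq> 0" using S2' m0 by (metis power_not_zero)
  have e3': "a2 = 2*(N-2)*m*c^2/(S*(x^2 + 4*m*c*x))" unfolding a2_def m_def[symmetric] S2'[symmetric]
    by (simp add: power3_eq_cube power2_eq_square)
  show "2*x*a2 + a1 = N/(2*(N-1)) - (N-2)/(2*(N-1)) * ((x/S)*(3 - (x/S)^2)/2)"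
  proof -
    define z where "z = x/S"
    define b where "b = 2*m*c/S"
    define k where "k = (N-2)/(2*m)"
    have rel: "z^2 + 2*z*b = 1"
    proof -
      have "S^2 * (z^2 + 2*z*b) = x^2 + 4*m*c*x" unfolding z_def b_def using m0
        by (simp add: field_simps power2_eq_square)
      hence "S^2 * (z^2 + 2*z*b) = S^2" using S2' by simp
      thus ?thesis using m0 by simp
    qed
    have a2': "2*x*a2 = 2*k*b^2*z" unfolding a2_def k_def b_def z_def m_def[symmetric] using m0
      by (simp add: field_simps power2_eq_square power3_eq_cube)
    have a1': "a1 = N/(2*m) - k*(z+b)" unfolding e2 k_def z_def b_def using m0
      by (simp add: field_simps)
    have br: "-(z+b) + 2*b^2*z + z*(3-z^2)/2 = 0"
    proof -
      have "-(z+b) + 2*b^2*z + z*(3-z^2)/2 = (z/2)*(1 - 2*b*z - z^2) - b*(1 - z^2 - 2*z*b)"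
        by (simp add: field_simps power2_eq_square)
      also have "\<dots> = 0" using rel by (simp add: algebra_simps)
      finally show ?thesis .
    qed
    have "2*x*a2 + a1 = N/(2*m) - k*(z*(3-z^2)/2) + k*(-(z+b) + 2*b^2*z + z*(3-z^2)/2)"
      unfolding a2' a1' by (simp add: algebra_simps)
    hence "2*x*a2 + a1 = N/(2*m) - k*(z*(3-z^2)/2)" by (simp only: br mult_zero_right add_0_right)
    thus ?thesis unfolding k_def z_def m_def .
  qed
  show "al - x*a1 = N*c - (N-2)*c*x/S"
    unfolding e1 e2 using m0
    apply (simp add: field_simps power2_eq_square)
    using S2' by algebra
  have c1: "2/N - N/(2*m) = -((N-2)/(2*m)*((N-2)/N))" using m0 unfolding m_def
    by (simp add: field_simps)
  have "2*x/N + N*c - al = (2/N - N/(2*m))*x + (N-2)/(2*m)*S" unfolding e1 by (simp add: algebra_simps)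
  hence "2*x/N + N*c - al = (N-2)/(2*m)*(S - (N-2)/N*x)" unfolding c1 by (simp add: algebra_simps)
  thus "2*x/N + N*c - al = (N-2)/(2*(N-1))*(S - (N-2)/N*x)" unfolding m_def .
  show "a2*x^2/2 = (N-2)*c*x/S * ((N-1)*c*x/S^2)"
    unfolding a2_def using m0 by (simp add: field_simps power2_eq_square power3_eq_cube)
qed


lemma expandE:
  fixes N c X a0 a1 a2 d :: real
  shows "(a0 + a1*d + 1/2*a2*d^2 + N*c)*(X+d)*(a1 + a2*d) - (2*c*(X+d) + (a0 + a1*d + 1/2*a2*d^2)^2 - N*c*(a0 + a1*d + 1/2*a2*d^2))
   = ((a0+N*c)*X*a1 - (2*c*X + a0^2 - N*c*a0)) + d*(X*a1^2 + (a0+N*c)*X*a2 + 2*N*c*a1 - a0*a1 - 2*c)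
     + a2/4*d^2*(6*(N*c+X*a1) + 2*(a1+X*a2)*d + a2*d^2)"
  by (simp add: field_simps power2_eq_square)

lemma expandPhi:
  fixes N c X a0 a1 a2 d K :: real
  assumes "N \<noteq> 0"
  shows "(2*(X+d)/N + N*c - (a0 + a1*d + 1/2*a2*d^2))^2 - K*(X+d)*((a0 + a1*d + 1/2*a2*d^2) - (X+d)/N)
   = ((2*X/N + N*c - a0)^2 - K*X*(a0 - X/N))
     + d*(2*(2*X/N + N*c - a0)*(2/N - a1) - K*((a0 - X/N) + X*(a1 - 1/N)))
     + d^2*((2/N - a1)^2 - a2*(2*X/N + N*c - a0) - K*((a1 - 1/N) + X*a2/2))
     + a2/4*d^3*(a2*d - 4*(2/N - a1) - 2*K)"
  using assms by (simp add: field_simps power2_eq_square power3_eq_cube)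



lemma numid: assumes "(N::real) \<ge> 3"
  shows "N/(2*(N-1)) - (N-2)/(2*(N-1)) * ((N^2-4*N+6)/(N^2-4)) = 3/(N+2)"
proof -
  obtain p q r where pqr: "p = N - 1" "q = N - 2" "r = N + 2" by blast
  have h: "N^2 - 4 = q*r" unfolding pqr by (simp add: power2_eq_square algebra_simps)
  have nz: "p \<noteq> 0" "q \<noteq> 0" "r \<noteq> 0" using assms unfolding pqr by auto
  have "N/(2*p) - q/(2*p) * ((N^2-4*N+6)/(q*r)) = 3/r"
    using nz apply (simp add: field_simps) using pqr by algebra
  thus ?thesis unfolding h pqr .
qed

lemma aux1: assumes "(N::real) > 1" shows "N/(2*(N-1)) - (N-2)/(2*(N-1)) = 1/(N-1)"
proof -
  have "N/(2*(N-1)) - (N-2)/(2*(N-1)) = (N - (N-2))/(2*(N-1))" by (simp add: diff_divide_distrib)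
  also have "N - (N-2) = 2*1" by simp
  also have "(2*1)/(2*(N-1)) = 1/(N-1)" by (rule nonzero_mult_divide_mult_cancel_left) simp
  finally show ?thesis .
qed

lemma glue:
  fixes f g h :: "real \<Rightarrow> real"
  assumes ab: "a \<le> b"
    and f: "(f has_real_derivative D) (at b within {a..b})"
    and g: "(g has_real_derivative D) (at b within {b..})"
    and hf: "\<And>y. a \<le> y \<Longrightarrow> y \<le> b \<Longrightarrow> f y = h y"
    and hg: "\<And>y. b \<le> y \<Longrightarrow> g y = h y"
  shows "(h has_real_derivative D) (at b within {a..})"
proof -
  have h1: "(h has_real_derivative D) (at b within {a..b})"
    by (rule has_field_derivative_transform_within[OF f, of 1]) (use ab hf in auto)
  have h2: "(h has_real_derivative D) (at b within {b..})"
    by (rule has_field_derivative_transform_within[OF g, of 1]) (use hg in auto)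
  have U: "{a..} = {a..b} \<union> {b..}" using ab by auto
  show ?thesis unfolding U has_field_derivative_iff Lim_within_Un
    using h1 h2 unfolding has_field_derivative_iff by simp
qed

lemma sqrt_step:
  fixes N T G :: real
  assumes N: "N \<ge> 3" and KT: "(N-2)^2/(N*(N-1)) * T \<le> G^2" and G: "G \<ge> 0"
  shows "(N-2)/sqrt (N*(N-1)) * sqrt T \<le> G"
proof -
  obtain K where K: "K = (N-2)^2/(N*(N-1))" by blast
  have "(N-2)/sqrt (N*(N-1)) = sqrt K"
    using N unfolding K by (simp add: real_sqrt_divide)
  hence e: "(N-2)/sqrt (N*(N-1)) * sqrt T = sqrt (K * T)"
    by (simp only: real_sqrt_mult)
  note KT = KT[folded K]
  have "sqrt (K * T) \<le> sqrt (G^2)" by (rule real_sqrt_le_mono[OF KT])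
  also have "\<dots> = G" using G by simp
  finally show ?thesis unfolding e .
qed

lemma sqrt_step_eq:
  fixes N T G :: real
  assumes N: "N \<ge> 3" and KT: "G^2 = (N-2)^2/(N*(N-1)) * T" and G: "G \<ge> 0"
  shows "(N-2)/sqrt (N*(N-1)) * sqrt T = G"
proof -
  obtain K where K: "K = (N-2)^2/(N*(N-1))" by blast
  have "(N-2)/sqrt (N*(N-1)) = sqrt K"
    using N unfolding K by (simp add: real_sqrt_divide)
  hence e: "(N-2)/sqrt (N*(N-1)) * sqrt T = sqrt (K * T)"
    by (simp only: real_sqrt_mult)
  note KT = KT[folded K]
  show ?thesis unfolding e KT[symmetric] using G by simp
qed

definition g1f :: "nat \<Rightarrow> real \<Rightarrow> real \<Rightarrow> real" where
  "g1f n c x = (if x0 n c \<le> x then a1f n c x else a1f n c (x0 n c) + a2f n c (x0 n c) * (x - x0 n c))"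
definition g2f :: "nat \<Rightarrow> real \<Rightarrow> real \<Rightarrow> real" where
  "g2f n c x = (if x0 n c \<le> x then a2f n c x else a2f n c (x0 n c))"

locale GS =
  fixes n :: nat and c :: real
  assumes n3: "n \<ge> 3" and c0: "c > 0"
begin

abbreviation "X \<equiv> x0 n c"
abbreviation "S0 \<equiv> Sf n c X"
abbreviation "A0 \<equiv> alpha n c X"
abbreviation "A1 \<equiv> a1f n c X"
abbreviation "A2 \<equiv> a2f n c X"
abbreviation "bt x \<equiv> A0 + A1*(x - X) + 1/2*A2*(x - X)^2"

lemma N3: "real n \<ge> 3" using n3 by simp

lemma X_pos: "X > 0"
  unfolding x0_def using yn_props[OF n3] c0 by simp

lemma Sx: assumes "x > 0"
  shows "Sf n c x > 0" "(Sf n c x)^2 = x^2 + 4*(real n - 1)*c*x"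
    "x < Sf n c x" "Sf n c x < x + 2*(real n - 1)*c"
  using Sf_facts[OF n3 c0 assms] by auto

lemma alpha_S: "alpha n c x = real n*c + real n/(2*(real n-1))*x - (real n-2)/(2*(real n-1))*Sf n c x"
  unfolding alpha_def Sf_def ..

lemma id_at:
  assumes x: "x > 0"
  defines "K \<equiv> (real n-2)^2/(real n*(real n-1))"
  shows "(alpha n c x + real n*c)*x*a1f n c x = 2*c*x + (alpha n c x)^2 - real n*c*alpha n c x"
    and "x*(a1f n c x)^2 + (alpha n c x+real n*c)*x*a2f n c x + 2*real n*c*a1f n c x - alpha n c x*a1f n c x - 2*c = 0"
    and "(2*x/real n + real n*c - alpha n c x)^2 = K*x*(alpha n c x - x/real n)"
    and "2*(2*x/real n + real n*c - alpha n c x)*(2/real n - a1f n c x) = K*((alpha n c x - x/real n) + x*(a1f n c x - 1/real n))"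
    and "(2/real n - a1f n c x)^2 - a2f n c x*(2*x/real n + real n*c - alpha n c x) = K*((a1f n c x - 1/real n) + x*a2f n c x/2)"
    and "2*x*a2f n c x + a1f n c x = real n/(2*(real n-1)) - (real n-2)/(2*(real n-1)) * ((x/Sf n c x)*(3 - (x/Sf n c x)^2)/2)"
    and "alpha n c x - x*a1f n c x = real n*c - (real n-2)*c*x/Sf n c x"
    and "2*x/real n + real n*c - alpha n c x = (real n-2)/(2*(real n-1))*(Sf n c x - (real n-2)/real n*x)"
    and "a2f n c x*x^2/2 = (real n-2)*c*x/Sf n c x * ((real n-1)*c*x/(Sf n c x)^2)"
proof -
  have N: "real n > 2" using N3 by simp
  note I = idents[OF N Sx(1)[OF x] Sx(2)[OF x]]
  note I2 = idents2[OF N Sx(1)[OF x] Sx(2)[OF x]]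
  show "(alpha n c x + real n*c)*x*a1f n c x = 2*c*x + (alpha n c x)^2 - real n*c*alpha n c x"
    using I(1) unfolding alpha_S a1f_def .
  show "x*(a1f n c x)^2 + (alpha n c x+real n*c)*x*a2f n c x + 2*real n*c*a1f n c x - alpha n c x*a1f n c x - 2*c = 0"
    using I(2) unfolding alpha_S a1f_def a2f_def .
  show "(2*x/real n + real n*c - alpha n c x)^2 = K*x*(alpha n c x - x/real n)"
    using I(3) unfolding alpha_S K_def .
  show "2*(2*x/real n + real n*c - alpha n c x)*(2/real n - a1f n c x) = K*((alpha n c x - x/real n) + x*(a1f n c x - 1/real n))"
    using I(4) unfolding alpha_S a1f_def K_def .
  show "(2/real n - a1f n c x)^2 - a2f n c x*(2*x/real n + real n*c - alpha n c x) = K*((a1f n c x - 1/real n) + x*a2f n c x/2)"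
    using I(5) unfolding alpha_S a1f_def a2f_def K_def .
  show "2*x*a2f n c x + a1f n c x = real n/(2*(real n-1)) - (real n-2)/(2*(real n-1)) * ((x/Sf n c x)*(3 - (x/Sf n c x)^2)/2)"
    using I2(1) unfolding a1f_def a2f_def .
  show "alpha n c x - x*a1f n c x = real n*c - (real n-2)*c*x/Sf n c x"
    using I2(2) unfolding alpha_S a1f_def .
  show "2*x/real n + real n*c - alpha n c x = (real n-2)/(2*(real n-1))*(Sf n c x - (real n-2)/real n*x)"
    using I2(3) unfolding alpha_S .
  show "a2f n c x*x^2/2 = (real n-2)*c*x/Sf n c x * ((real n-1)*c*x/(Sf n c x)^2)"
    using I2(4) unfolding a2f_def .
qed

lemma beta_eq: "beta n c x = bt x"
  unfolding beta_def deriv_alpha[OF n3 c0 X_pos] ..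

lemma gamma_eq: "gamma n c x = (if X \<le> x then alpha n c x else bt x)"
  unfolding gamma_def beta_eq ..

lemma A2_pos: "A2 > 0"
  unfolding a2f_def using Sx(1)[OF X_pos] N3 c0 by simp

lemma ratio_sq: assumes "x > 0" shows "(x / Sf n c x)^2 = x / (x + 4*(real n - 1)*c)"
proof -
  have "(x / Sf n c x)^2 = x^2 / (x^2 + 4*(real n - 1)*c*x)" by (simp add: power_divide Sx(2)[OF assms])
  also have "\<dots> = (x*x) / (x*(x + 4*(real n - 1)*c))" by (simp add: power2_eq_square algebra_simps)
  also have "\<dots> = x / (x + 4*(real n - 1)*c)" using assms by simp
  finally show ?thesis .
qed

lemma p0_prop: "(X/S0)*(3 - (X/S0)^2) = 2*((real n^2 - 4*real n + 6)/(real n^2 - 4))"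
proof -
  define y where "y = y_n n"
  have y: "y > 0" unfolding y_def using yn_props[OF n3] by simp
  have Xy: "X = y*c" unfolding x0_def y_def ..
  have "(X/S0)^2 = X/(X + 4*(real n - 1)*c)" by (rule ratio_sq[OF X_pos])
  also have "\<dots> = (c*y)/(c*(y + 4*(real n - 1)))" unfolding Xy by (simp add: algebra_simps)
  also have "\<dots> = y/(y + 4*(real n - 1))" using c0 by simp
  finally have q: "(X/S0)^2 = y/(y + 4*(real n - 1))" .
  have p: "X/S0 > 0" using X_pos Sx(1)[OF X_pos] by simp
  have "X/S0 = sqrt ((X/S0)^2)" using X_pos Sx(1)[OF X_pos] by simp
  hence "X/S0 = sqrt (y/(y + 4*(real n - 1)))" unfolding q .
  thus ?thesis using yn_props[OF n3] q unfolding y_def by simp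
qed

lemma hX: "2*X*A2 + A1 = 3/(real n + 2)"
proof -
  have "2*X*A2 + A1 = real n/(2*(real n-1)) - (real n-2)/(2*(real n-1)) * ((real n^2 - 4*real n + 6)/(real n^2 - 4))"
  proof -
    define r where "r = (real n^2 - 4*real n + 6)/(real n^2 - 4)"
    have pr: "(X/S0)*(3 - (X/S0)^2)/2 = r"
      using p0_prop unfolding r_def[symmetric] by simp
    show ?thesis unfolding id_at(6)[OF X_pos] pr r_def ..
  qed
  also have "\<dots> = 3/(real n + 2)" by (rule numid[OF N3])
  finally show ?thesis .
qed

lemma S_gt1: assumes "x > 0" shows "x / Sf n c x < 1" "x / Sf n c x > 0"
  using Sx[OF assms] assms by auto

lemma ratio_mono: assumes "X < x" shows "X/S0 < x / Sf n c x"
proof -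
  have x0: "x > 0" using assms X_pos by simp
  obtain M where M: "M = 4*(real n - 1)*c" by blast
  have m: "M > 0" unfolding M using N3 c0 by simp
  have e1: "X/(X + M) = 1 - M/(X+M)" using m X_pos by (simp add: field_simps)
  have e2: "x/(x + M) = 1 - M/(x+M)" using m x0 by (simp add: field_simps)
  have "M/(x+M) < M/(X+M)" using assms m X_pos by (intro divide_strict_left_mono) auto
  hence "X/(X + M) < x/(x + M)" unfolding e1 e2 by simp
  hence "X/(X + 4*(real n - 1)*c) < x/(x + 4*(real n - 1)*c)" unfolding M .
  hence "(X/S0)^2 < (x / Sf n c x)^2" unfolding ratio_sq[OF X_pos] ratio_sq[OF x0] .
  thus ?thesis using S_gt1(2)[OF x0] by (simp add: power_less_imp_less_base)
qed

lemma G_mono: assumes "0 \<le> p" "p < q" "q \<le> 1" shows "p*(3 - p^2) < q*(3 - (q::real)^2)"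
proof -
  have "q*(3 - q^2) - p*(3 - p^2) = (q - p)*(3 - q^2 - q*p - p^2)"
    by (simp add: algebra_simps power2_eq_square)
  moreover have "q^2 \<le> 1" using assms by (simp add: power_le_one)
  moreover have "q*p < 1" using assms by (smt (verit) mult_le_one mult_strict_left_mono)
  moreover have "p^2 < 1" using assms by (simp add: abs_square_less_1)
  ultimately show ?thesis using assms by (smt (verit) mult_pos_pos)
qed

lemma k_pos: "(real n - 2)/(2*(real n - 1)) > 0" using N3 by simp

lemma part_i_alpha: assumes "X \<le> x"
  shows "2*x*a2f n c x + a1f n c x \<le> 3/(real n + 2)
     \<and> (2*x*a2f n c x + a1f n c x = 3/(real n + 2) \<longleftrightarrow> x = X)"
proof (cases "x = X")
  case True thus ?thesis using hX by simp
next
  case False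
  hence lt: "X < x" using assms by simp
  have x0: "x > 0" using lt X_pos by simp
  have "(X/S0)*(3 - (X/S0)^2) < (x / Sf n c x)*(3 - (x / Sf n c x)^2)"
    using G_mono[OF _ ratio_mono[OF lt]] S_gt1[OF X_pos] S_gt1[OF x0] by simp
  hence "(X/S0)*(3 - (X/S0)^2)/2 < (x / Sf n c x)*(3 - (x / Sf n c x)^2)/2"
    by (rule divide_strict_right_mono) simp
  hence "(real n-2)/(2*(real n-1)) * ((X/S0)*(3 - (X/S0)^2)/2)
      < (real n-2)/(2*(real n-1)) * ((x / Sf n c x)*(3 - (x / Sf n c x)^2)/2)"
    using k_pos by (rule mult_strict_left_mono)
  hence "2*x*a2f n c x + a1f n c x < 2*X*A2 + A1"
    unfolding id_at(6)[OF x0] id_at(6)[OF X_pos] by linarith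
  thus ?thesis using hX False by simp
qed

lemma part_i_beta: assumes "x < X"
  shows "2*x*A2 + (A1 + A2*(x - X)) < 3/(real n + 2)"
proof -
  have e: "2*x*A2 + (A1 + A2*(x - X)) = (2*X*A2 + A1) + 3*(A2*(x - X))" by (simp add: algebra_simps)
  have "A2*(x - X) < 0" using A2_pos assms by (simp add: mult_pos_neg)
  thus ?thesis unfolding e hX by linarith
qed

lemma A1_lt: "A1 < 1/(real n - 1)"
proof -
  have "(X + 2*(real n - 1)*c)/S0 > 1" using Sx[OF X_pos] by simp
  hence i: "(real n-2)/(2*(real n-1)) * ((X + 2*(real n - 1)*c)/S0) > (real n-2)/(2*(real n-1)) * 1"
    using k_pos by (intro mult_strict_left_mono) auto
  have c: "real n/(2*(real n-1)) - (real n-2)/(2*(real n-1)) = 1/(real n - 1)"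
    using N3 by (intro aux1) simp
  have e: "A1 = real n/(2*(real n-1)) - (real n-2)/(2*(real n-1)) * ((X + 2*(real n - 1)*c)/S0)"
    unfolding a1f_def by simp
  show ?thesis unfolding e using i c by linarith
qed

lemma alpha_bounds: assumes "x > 0"
  shows "x/(real n - 1) + 2*c < alpha n c x" "alpha n c x < x/(real n - 1) + real n * c"
proof -
  have c: "x/(real n - 1) = (real n/(2*(real n-1)) - (real n-2)/(2*(real n-1)))*x"
    using aux1[of "real n"] N3 by simp
  obtain a b where ab: "a = real n/(2*(real n-1))" "b = (real n-2)/(2*(real n-1))" by blast
  have e: "alpha n c x - x/(real n - 1) = real n*c + (real n-2)/(2*(real n-1))*(x - Sf n c x)"
    unfolding alpha_S c ab[symmetric] by (simp add: algebra_simps)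
  have "(real n-2)/(2*(real n-1))*(x - Sf n c x) < 0"
    by (rule mult_pos_neg) (use k_pos Sx(3)[OF assms] in auto)
  thus "alpha n c x < x/(real n - 1) + real n * c" using e by simp
  have "(real n-2)/(2*(real n-1))*(x - Sf n c x) > (real n-2)/(2*(real n-1))*(-(2*(real n - 1)*c))"
    using k_pos Sx(4)[OF assms] by (intro mult_strict_left_mono) auto
  moreover have "(real n-2)/(2*(real n-1))*(-(2*(real n - 1)*c)) = -((real n - 2)*c)" using N3 by simp
  ultimately show "x/(real n - 1) + 2*c < alpha n c x" using e by (simp add: algebra_simps)
qed

lemma g0_nonneg: assumes "x > 0" shows "2*x/real n + real n*c - alpha n c x \<ge> 0"
proof -
  have "(real n-2)/real n*x \<le> x" using N3 assms by (simp add: field_simps)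
  hence "Sf n c x - (real n-2)/real n*x \<ge> 0" using Sx(3)[OF assms] by simp
  hence "(real n-2)/(2*(real n-1))*(Sf n c x - (real n-2)/real n*x) \<ge> 0"
    using k_pos by (intro mult_nonneg_nonneg) auto
  thus ?thesis unfolding id_at(8)[OF assms] .
qed

lemma bt0: "bt 0 < real n * c"
proof -
  have w: "(real n-1)*c*X > 0" using X_pos N3 c0 by simp
  have "S0^2 = X^2 + 4*((real n-1)*c*X)" unfolding Sx(2)[OF X_pos] by (simp add: algebra_simps)
  hence "S0^2 > (real n-1)*c*X" using w X_pos by (smt (verit) zero_less_power)
  moreover have "S0^2 > 0" using Sx(1)[OF X_pos] by simp
  ultimately have q: "(real n-1)*c*X/S0^2 < 1" by simp
  have pos: "(real n-2)*c*X/S0 > 0" using X_pos Sx(1)[OF X_pos] N3 c0 by simp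
  have "bt 0 = (A0 - X*A1) + A2*X^2/2" by (simp add: algebra_simps power2_eq_square)
  also have "\<dots> = real n*c - (real n-2)*c*X/S0 + (real n-2)*c*X/S0 * ((real n-1)*c*X/S0^2)"
    unfolding id_at(7)[OF X_pos] id_at(9)[OF X_pos] ..
  also have "\<dots> < real n * c" using mult_strict_left_mono[OF q pos] by simp
  finally show ?thesis .
qed

lemma bt_lower: assumes "0 \<le> x" "x \<le> X" shows "bt x - x/(real n - 1) > 2*c"
proof -
  obtain t where t: "t = 1/(real n - 1)" by blast
  have "bt x - x/(real n - 1) - (A0 - X/(real n - 1)) = (A1 - 1/(real n - 1))*(x - X) + 1/2*A2*(x-X)^2"
  proof -
    have tx: "x/(real n - 1) = x*t" "X/(real n - 1) = X*t" unfolding t by simp_all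
    show ?thesis unfolding tx t[symmetric] by (simp add: algebra_simps power2_eq_square)
  qed
  moreover have "(A1 - 1/(real n - 1))*(x - X) \<ge> 0" using A1_lt assms
    by (simp add: mult_nonpos_nonpos)
  moreover have "1/2*A2*(x-X)^2 \<ge> 0" using A2_pos by simp
  moreover have "A0 - X/(real n - 1) > 2*c" using alpha_bounds(1)[OF X_pos] by simp
  ultimately show ?thesis by linarith
qed

lemma bt_upper: assumes "0 \<le> x" "x \<le> X" shows "bt x - x/(real n - 1) < real n * c"
proof -
  define u where "u = x/X"
  have u: "0 \<le> u" "u \<le> 1" unfolding u_def using assms X_pos by auto
  have e: "bt x - x/(real n - 1) = (1 - u)*(bt 0) + u*(A0 - X/(real n - 1)) + A2/2*x*(x-X)"
    unfolding u_def using X_pos N3 by (simp add: field_simps power2_eq_square)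
  have t: "A2/2*x*(x-X) \<le> 0" using A2_pos assms by (simp add: mult_nonneg_nonpos)
  have a: "bt 0 < real n * c" by (rule bt0)
  have b: "A0 - X/(real n - 1) < real n * c" using alpha_bounds(2)[OF X_pos] by simp
  have "(1 - u)*(bt 0) + u*(A0 - X/(real n - 1)) < real n * c"
  proof (cases "u = 1")
    case True thus ?thesis using b by simp
  next
    case False
    hence "1 - u > 0" using u by simp
    hence "(1 - u)*(bt 0) < (1-u)*(real n * c)" using a by simp
    moreover have "u*(A0 - X/(real n - 1)) \<le> u*(real n * c)" using b u by (simp add: mult_left_mono)
    ultimately show ?thesis by (simp add: algebra_simps)
  qed
  thus ?thesis using e t by linarith
qed

lemma Ppos: assumes "0 \<le> z" "z \<le> X" shows "real n*c + z*(A1 + A2*(z - X)) > 0"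
proof -
  have "real n*c + z*(A1 + A2*(z - X)) = (real n*c - bt 0) + bt z + A2*z^2/2"
    by (simp add: algebra_simps power2_eq_square)
  moreover have "bt z > 0" using bt_lower[OF assms] assms N3 c0
    by (smt (verit) divide_nonneg_pos)
  moreover have "A2*z^2/2 \<ge> 0" using A2_pos by simp
  ultimately show ?thesis using bt0 by linarith
qed

lemma part_ii_beta: assumes "0 \<le> x" "x < X"
  shows "(bt x + real n*c)*x*(A1 + A2*(x - X)) > 2*c*x + (bt x)^2 - real n*c*bt x"
proof -
  define d where "d = x - X"
  have d: "d < 0" "-X \<le> d" unfolding d_def using assms by auto
  have xd: "X + d = x" unfolding d_def by simp
  note E = expandE[of A0 A1 d A2 "real n" c X, unfolded xd]
  have r0: "(A0 + real n*c)*X*A1 - (2*c*X + A0^2 - real n*c*A0) = 0" using id_at(1)[OF X_pos] by simp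
  have r1: "X*A1^2 + (A0 + real n*c)*X*A2 + 2*real n*c*A1 - A0*A1 - 2*c = 0" using id_at(2)[OF X_pos] by simp
  obtain P1 P2 where P: "P1 = real n*c + X*A1" "P2 = real n*c + (X + d/2)*(A1 + A2*(d/2))" by blast
  have br: "6*(real n*c+X*A1) + 2*(A1+X*A2)*d + A2*d^2 = 2*P1 + 4*P2"
    unfolding P by (simp add: algebra_simps power2_eq_square)
  have p1: "P1 > 0" using Ppos[of X] X_pos unfolding P by simp
  have p2: "P2 > 0" using Ppos[of "X + d/2"] d unfolding P by simp
  have brpos: "6*(real n*c+X*A1) + 2*(A1+X*A2)*d + A2*d^2 > 0" unfolding br using p1 p2 by simp
  have "A2/4*d^2*(6*(real n*c+X*A1) + 2*(A1+X*A2)*d + A2*d^2) > 0"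
    using A2_pos d brpos by simp
  hence "(A0 + A1*d + 1/2*A2*d^2 + real n*c)*x*(A1 + A2*d) - (2*c*x + (A0 + A1*d + 1/2*A2*d^2)^2 - real n*c*(A0 + A1*d + 1/2*A2*d^2)) > 0"
    unfolding E r0 r1 by simp
  thus ?thesis unfolding d_def by simp
qed

lemma part_iii_alpha: assumes "X \<le> x" shows "alpha n c x > x * a1f n c x"
proof -
  have x0: "x > 0" using assms X_pos by simp
  have "(real n-2)*c*x/Sf n c x = (real n-2)*c*(x/Sf n c x)" by simp
  also have "\<dots> < (real n-2)*c*1" using S_gt1[OF x0] N3 c0 by (intro mult_strict_left_mono) auto
  moreover have "(real n-2)*c*1 < real n*c" using c0 by (simp add: algebra_simps)
  ultimately have "(real n-2)*c*x/Sf n c x < real n * c" by linarith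
  thus ?thesis using id_at(7)[OF x0] by simp
qed

lemma part_iii_beta: assumes "0 \<le> x" "x < X" shows "bt x > x * (A1 + A2*(x - X))"
proof -
  have "bt x - x * (A1 + A2*(x - X)) = (A0 - X*A1) + A2/2*(X^2 - x^2)"
    by (simp add: algebra_simps power2_eq_square)
  moreover have "X^2 - x^2 \<ge> 0" using assms by (simp add: power_mono)
  moreover have "A0 - X*A1 > 0" using part_iii_alpha[of X] by simp
  ultimately show ?thesis using A2_pos by (smt (verit) divide_nonneg_pos mult_nonneg_nonneg)
qed

lemma a2f_anti: assumes "0 < y" "y \<le> z" shows "a2f n c z \<le> a2f n c y"
proof -
  have z0: "z > 0" using assms by simp
  have "y^2 + 4*(real n - 1)*c*y \<le> z^2 + 4*(real n - 1)*c*z"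
    using assms N3 c0 by (intro add_mono power_mono mult_left_mono) auto
  hence "Sf n c y \<le> Sf n c z" unfolding Sf_def by simp
  hence "(Sf n c y)^3 \<le> (Sf n c z)^3" using Sx(1)[OF assms(1)] by (intro power_mono) auto
  moreover have "(Sf n c y)^3 > 0" using Sx(1)[OF assms(1)] by simp
  moreover have "(Sf n c z)^3 > 0" using Sx(1)[OF z0] by simp
  moreover have "2*(real n-2)*(real n-1)*c^2 \<ge> 0" using N3 c0 by simp
  ultimately show ?thesis unfolding a2f_def by (intro divide_left_mono) (auto intro: mult_pos_pos)
qed

lemma lin_deriv: "((\<lambda>y. A1 + A2*(y - X)) has_real_derivative A2) (at y)"
  by (auto intro!: derivative_eq_intros)

lemma bt_deriv: "((\<lambda>y. bt y) has_real_derivative A1 + A2*(y - X)) (at y)"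
  by (rule DERIV_cong, (rule derivative_eq_intros refl)+) (simp add: algebra_simps)

lemma dd_deriv: assumes "y > 0"
  shows "((\<lambda>y. a1f n c y - (A1 + A2*(y - X))) has_real_derivative a2f n c y - A2) (at y)"
  by (intro DERIV_diff a1f_deriv[OF n3 c0 assms] lin_deriv)

lemma d_deriv: assumes "y > 0"
  shows "((\<lambda>y. alpha n c y - bt y) has_real_derivative a1f n c y - (A1 + A2*(y - X))) (at y)"
  by (intro DERIV_diff alpha_deriv[OF n3 c0 assms] bt_deriv)

lemma bt_le_alpha: assumes "0 < x" "x \<le> X" shows "bt x \<le> alpha n c x"
proof -
  have s1: "a1f n c y - (A1 + A2*(y - X)) \<le> 0" if "x \<le> y" "y \<le> X" for y
  proof -
    have "(\<lambda>y. a1f n c y - (A1 + A2*(y - X))) y \<le> (\<lambda>y. a1f n c y - (A1 + A2*(y - X))) X"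
    proof (rule DERIV_nonneg_imp_nondecreasing[OF that(2)])
      fix t assume t: "y \<le> t" "t \<le> X"
      have t0: "t > 0" using t that assms by simp
      show "\<exists>D. ((\<lambda>y. a1f n c y - (A1 + A2*(y - X))) has_real_derivative D) (at t) \<and> D \<ge> 0"
        using dd_deriv[OF t0] a2f_anti[OF t0 t(2)] by auto
    qed
    thus ?thesis by simp
  qed
  have "(\<lambda>y. -(alpha n c y - bt y)) x \<le> (\<lambda>y. -(alpha n c y - bt y)) X"
  proof (rule DERIV_nonneg_imp_nondecreasing[OF assms(2)])
    fix t assume t: "x \<le> t" "t \<le> X"
    have t0: "t > 0" using t assms by simp
    show "\<exists>D. ((\<lambda>y. -(alpha n c y - bt y)) has_real_derivative D) (at t) \<and> D \<ge> 0"
      using DERIV_minus[OF d_deriv[OF t0]] s1[OF t] by auto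
  qed
  thus ?thesis by simp
qed

lemma alpha_le_bt: assumes "X \<le> x" shows "alpha n c x \<le> bt x"
proof -
  have s1: "a1f n c y - (A1 + A2*(y - X)) \<le> 0" if "X \<le> y" "y \<le> x" for y
  proof -
    have "(\<lambda>y. -(a1f n c y - (A1 + A2*(y - X)))) X \<le> (\<lambda>y. -(a1f n c y - (A1 + A2*(y - X)))) y"
    proof (rule DERIV_nonneg_imp_nondecreasing[OF that(1)])
      fix t assume t: "X \<le> t" "t \<le> y"
      have t0: "t > 0" using t X_pos by simp
      show "\<exists>D. ((\<lambda>y. -(a1f n c y - (A1 + A2*(y - X)))) has_real_derivative D) (at t) \<and> D \<ge> 0"
        using DERIV_minus[OF dd_deriv[OF t0]] a2f_anti[OF X_pos t(1)] by auto
    qed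
    thus ?thesis by simp
  qed
  have "(\<lambda>y. -(alpha n c y - bt y)) X \<le> (\<lambda>y. -(alpha n c y - bt y)) x"
  proof (rule DERIV_nonneg_imp_nondecreasing[OF assms])
    fix t assume t: "X \<le> t" "t \<le> x"
    have t0: "t > 0" using t X_pos by simp
    show "\<exists>D. ((\<lambda>y. -(alpha n c y - bt y)) has_real_derivative D) (at t) \<and> D \<ge> 0"
      using DERIV_minus[OF d_deriv[OF t0]] s1[OF t] by auto
  qed
  thus ?thesis by simp
qed

lemma alpha0: "alpha n c 0 = real n * c" unfolding alpha_def by simp

lemma part_vi_alpha: assumes "X \<le> x"
  shows "(real n - 2) / sqrt (real n * (real n - 1)) * sqrt (x * (alpha n c x - x / real n)) + alpha n c x
     = 2 / real n * x + real n * c"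
proof -
  have x0: "x > 0" using assms X_pos by simp
  have "(real n - 2) / sqrt (real n * (real n - 1)) * sqrt (x * (alpha n c x - x / real n))
      = 2*x/real n + real n*c - alpha n c x"
    using id_at(3)[OF x0] g0_nonneg[OF x0] N3 by (intro sqrt_step_eq) (auto simp: mult.assoc)
  thus ?thesis by simp
qed

lemma part_vi_beta: assumes "0 \<le> x" "x < X"
  shows "(real n - 2) / sqrt (real n * (real n - 1)) * sqrt (x * (bt x - x / real n)) + bt x
     \<le> 2 / real n * x + real n * c"
proof -
  define K where "K = (real n-2)^2/(real n*(real n-1))"
  define d where "d = x - X"
  have d: "d < 0" unfolding d_def using assms by auto
  have xd: "X + d = x" unfolding d_def by simp
  have Nz: "real n \<noteq> 0" using N3 by simp
  note P = expandPhi[OF Nz, of X d c A0 A1 A2 K, unfolded xd]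
  have r0: "(2*X/real n + real n*c - A0)^2 - K*X*(A0 - X/real n) = 0" using id_at(3)[OF X_pos] unfolding K_def by simp
  have r1: "2*(2*X/real n + real n*c - A0)*(2/real n - A1) - K*((A0 - X/real n) + X*(A1 - 1/real n)) = 0"
    using id_at(4)[OF X_pos] unfolding K_def by simp
  have r2: "(2/real n - A1)^2 - A2*(2*X/real n + real n*c - A0) - K*((A1 - 1/real n) + X*A2/2) = 0"
    using id_at(5)[OF X_pos] unfolding K_def by simp
  have K0: "K > 0" unfolding K_def using N3 by simp
  have "1/(real n - 1) \<le> 2/real n" using N3 by (simp add: field_simps)
  hence g1: "2/real n - A1 > 0" using A1_lt by simp
  have "A2*d - 4*(2/real n - A1) - 2*K < 0" using A2_pos d g1 K0 by (smt (verit) mult_pos_neg)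
  moreover have "d^3 < 0" using d by (simp add: power3_eq_cube mult_pos_neg mult_neg_neg)
  ultimately have "d^3*(A2*d - 4*(2/real n - A1) - 2*K) > 0" by (simp add: mult_neg_neg)
  moreover have a4: "A2/4 > 0" using A2_pos by simp
  ultimately have "A2/4*(d^3*(A2*d - 4*(2/real n - A1) - 2*K)) > 0" by (intro mult_pos_pos[OF a4])
  hence "A2/4*d^3*(A2*d - 4*(2/real n - A1) - 2*K) > 0" by (simp only: mult.assoc)
  moreover have Pe: "(2*x/real n + real n*c - (A0 + A1*d + 1/2*A2*d^2))^2 - K*x*((A0 + A1*d + 1/2*A2*d^2) - x/real n)
     = A2/4*d^3*(A2*d - 4*(2/real n - A1) - 2*K)"
    using P unfolding r0 r1 r2 by simp
  ultimately have Phi: "(2*x/real n + real n*c - (A0 + A1*d + 1/2*A2*d^2))^2 - K*x*((A0 + A1*d + 1/2*A2*d^2) - x/real n) > 0"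
    by (simp only: Pe)
  have btd: "bt x = A0 + A1*d + 1/2*A2*d^2" unfolding d_def ..
  have Phi': "K * (x * (bt x - x/real n)) \<le> (2*x/real n + real n*c - bt x)^2"
    using Phi unfolding btd by (simp add: mult.assoc)
  \<comment> \<open>G nonneg by concavity\<close>
  define u where "u = x/X"
  have u: "0 \<le> u" "u \<le> 1" unfolding u_def using assms X_pos by auto
  have e: "2*x/real n + real n*c - bt x = (1 - u)*(real n*c - bt 0) + u*(2*X/real n + real n*c - A0) - A2/2*x*(x-X)"
    unfolding u_def using X_pos N3 by (simp add: field_simps power2_eq_square)
  have G0: "real n*c - bt 0 > 0" using bt0 by simp
  have GX: "2*X/real n + real n*c - A0 \<ge> 0" using g0_nonneg[OF X_pos] .
  have t: "A2/2*x*(x-X) \<le> 0" using A2_pos assms by (simp add: mult_nonneg_nonpos)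
  have "(1 - u)*(real n*c - bt 0) \<ge> 0" using u G0 by simp
  moreover have "u*(2*X/real n + real n*c - A0) \<ge> 0" using u GX by simp
  ultimately have Gpos: "2*x/real n + real n*c - bt x \<ge> 0" unfolding e using t by linarith
  have "(real n - 2) / sqrt (real n * (real n - 1)) * sqrt (x * (bt x - x / real n)) \<le> 2*x/real n + real n*c - bt x"
    using Phi' Gpos N3 unfolding K_def by (intro sqrt_step) auto
  thus ?thesis by simp
qed

lemma gamma_at_deriv: assumes "0 \<le> x"
  shows "(gamma n c has_real_derivative g1f n c x) (at x within {0..})"
proof (cases "X < x")
  case True
  have x0: "x > 0" using True X_pos by simp
  have "(gamma n c has_real_derivative a1f n c x) (at x)"
    by (rule has_field_derivative_transform_within_open[OF alpha_deriv[OF n3 c0 x0], of "{X<..}"])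
       (use True in \<open>auto simp: gamma_eq\<close>)
  thus ?thesis unfolding g1f_def using True by (simp add: has_field_derivative_at_within)
next
  case False
  show ?thesis
  proof (cases "x = X")
    case True
    have f: "((\<lambda>y. bt y) has_real_derivative A1) (at X within {0..X})"
      using bt_deriv[of X] by (simp add: has_field_derivative_at_within)
    have g: "(alpha n c has_real_derivative A1) (at X within {X..})"
      using alpha_deriv[OF n3 c0 X_pos] by (simp add: has_field_derivative_at_within)
    have "(gamma n c has_real_derivative A1) (at X within {0..})"
      by (rule glue[OF _ f g]) (use X_pos in \<open>auto simp: gamma_eq\<close>)
    thus ?thesis unfolding g1f_def using True by simp
  next
    case False
    hence lt: "x < X" using \<open>\<not> X < x\<close> by simp
    have "(gamma n c has_real_derivative A1 + A2*(x - X)) (at x)"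
      by (rule has_field_derivative_transform_within_open[OF bt_deriv, of "{..<X}"])
         (use lt in \<open>auto simp: gamma_eq\<close>)
    thus ?thesis unfolding g1f_def using lt by (simp add: has_field_derivative_at_within)
  qed
qed

lemma g1_at_deriv: assumes "0 \<le> x"
  shows "(g1f n c has_real_derivative g2f n c x) (at x within {0..})"
proof (cases "X < x")
  case True
  have x0: "x > 0" using True X_pos by simp
  have "(g1f n c has_real_derivative a2f n c x) (at x)"
    by (rule has_field_derivative_transform_within_open[OF a1f_deriv[OF n3 c0 x0], of "{X<..}"])
       (use True in \<open>auto simp: g1f_def\<close>)
  thus ?thesis unfolding g2f_def using True by (simp add: has_field_derivative_at_within)
next
  case False
  show ?thesis
  proof (cases "x = X")
    case True
    have f: "((\<lambda>y. A1 + A2*(y - X)) has_real_derivative A2) (at X within {0..X})"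
      using lin_deriv[of X] by (simp add: has_field_derivative_at_within)
    have g: "(a1f n c has_real_derivative A2) (at X within {X..})"
      using a1f_deriv[OF n3 c0 X_pos] by (simp add: has_field_derivative_at_within)
    have "(g1f n c has_real_derivative A2) (at X within {0..})"
      by (rule glue[OF _ f g]) (use X_pos in \<open>auto simp: g1f_def\<close>)
    thus ?thesis unfolding g2f_def using True by simp
  next
    case False
    hence lt: "x < X" using \<open>\<not> X < x\<close> by simp
    have "(g1f n c has_real_derivative A2) (at x)"
      by (rule has_field_derivative_transform_within_open[OF lin_deriv, of "{..<X}"])
         (use lt in \<open>auto simp: g1f_def\<close>)
    thus ?thesis unfolding g2f_def using lt by (simp add: has_field_derivative_at_within)
  qed
qed

lemma a2f_isCont: assumes "x > 0" shows "isCont (a2f n c) x"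
proof -
  have "isCont (Sf n c) x" by (rule DERIV_isCont[OF Sf_deriv[OF n3 c0 assms]])
  thus ?thesis unfolding a2f_def[abs_def]
    by (intro continuous_intros) (use Sx(1)[OF assms] in auto)
qed

lemma g2_cont: "continuous_on {0..} (g2f n c)"
proof -
  have e: "g2f n c = (\<lambda>x. if x \<le> X then A2 else a2f n c x)"
    by (rule ext) (auto simp: g2f_def)
  have c2: "continuous_on {x \<in> {0..}. X \<le> x} (a2f n c)"
    by (rule continuous_at_imp_continuous_on) (use X_pos a2f_isCont in auto)
  show ?thesis unfolding e
    by (rule continuous_on_cases_le[OF continuous_on_const c2 continuous_on_id]) auto
qed

lemma pointwise: assumes "x \<ge> 0"
  shows "(2 * x * g2f n c x + g1f n c x \<le> 3 / (real n + 2)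
           \<and> (2 * x * g2f n c x + g1f n c x = 3 / (real n + 2) \<longleftrightarrow> x = x0 n c))
      \<and> ((gamma n c x + real n * c) * x * g1f n c x \<ge> 2 * c * x + (gamma n c x)\<^sup>2 - real n * c * gamma n c x
           \<and> ((gamma n c x + real n * c) * x * g1f n c x = 2 * c * x + (gamma n c x)\<^sup>2 - real n * c * gamma n c x
                \<longleftrightarrow> x \<ge> x0 n c))
      \<and> gamma n c x > x * g1f n c x
      \<and> gamma n c x = min (alpha n c x) (beta n c x)
      \<and> x / (real n - 1) + 2 * c < gamma n c x \<and> gamma n c x < x / (real n - 1) + real n * c
      \<and> (real n - 2) / sqrt (real n * (real n - 1)) * sqrt (x * (gamma n c x - x / real n)) + gamma n c x
           \<le> 2 / real n * x + real n * c"
proof (cases "X \<le> x")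
  case True
  have x0: "x > 0" using True X_pos by simp
  have G: "gamma n c x = alpha n c x" using True by (simp add: gamma_eq)
  have G1: "g1f n c x = a1f n c x" "g2f n c x = a2f n c x" using True by (simp_all add: g1f_def g2f_def)
  have m: "min (alpha n c x) (beta n c x) = alpha n c x" using alpha_le_bt[OF True] unfolding beta_eq by simp
  show ?thesis unfolding G G1 m
    using part_i_alpha[OF True] id_at(1)[OF x0] True part_iii_alpha[OF True] alpha_bounds[OF x0]
      part_vi_alpha[OF True] by auto
next
  case False
  hence lt: "x < X" by simp
  have G: "gamma n c x = bt x" using lt by (simp add: gamma_eq)
  have G1: "g1f n c x = A1 + A2*(x - X)" "g2f n c x = A2" using lt by (simp_all add: g1f_def g2f_def)
  have le: "bt x \<le> alpha n c x"
  proof (cases "x = 0")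
    case True thus ?thesis using bt0 alpha0 by simp
  next
    case False thus ?thesis using bt_le_alpha[of x] assms lt by simp
  qed
  have m: "min (alpha n c x) (beta n c x) = bt x" using le unfolding beta_eq by simp
  have i: "2 * x * A2 + (A1 + A2*(x - X)) < 3 / (real n + 2)" by (rule part_i_beta[OF lt])
  have ii: "(bt x + real n*c)*x*(A1 + A2*(x - X)) > 2*c*x + (bt x)^2 - real n*c*bt x"
    by (rule part_ii_beta[OF assms lt])
  have v1: "bt x - x/(real n - 1) > 2*c" using bt_lower[OF assms] lt by simp
  have v2: "bt x - x/(real n - 1) < real n * c" using bt_upper[OF assms] lt by simp
  show ?thesis unfolding G G1 m
    using i ii part_iii_beta[OF assms lt] v1 v2 part_vi_beta[OF assms lt] lt by auto
qed

end

theorem mainTheorem8: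
  fixes n :: nat and c :: real
  assumes "n \<ge> 3" and "c > 0"
  shows "\<exists>g1 g2 :: real \<Rightarrow> real.
     (\<forall>x\<ge>0. (gamma n c has_real_derivative g1 x) (at x within {0..})
            \<and> (g1 has_real_derivative g2 x) (at x within {0..}))
   \<and> continuous_on {0..} g2
   \<and> (\<forall>x\<ge>0.
        (2 * x * g2 x + g1 x \<le> 3 / (real n + 2)
           \<and> (2 * x * g2 x + g1 x = 3 / (real n + 2) \<longleftrightarrow> x = x0 n c))
      \<and> ((gamma n c x + real n * c) * x * g1 x \<ge> 2 * c * x + (gamma n c x)\<^sup>2 - real n * c * gamma n c x
           \<and> ((gamma n c x + real n * c) * x * g1 x = 2 * c * x + (gamma n c x)\<^sup>2 - real n * c * gamma n c x
                \<longleftrightarrow> x \<ge> x0 n c))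
      \<and> gamma n c x > x * g1 x
      \<and> gamma n c x = min (alpha n c x) (beta n c x)
      \<and> x / (real n - 1) + 2 * c < gamma n c x \<and> gamma n c x < x / (real n - 1) + real n * c
      \<and> (real n - 2) / sqrt (real n * (real n - 1)) * sqrt (x * (gamma n c x - x / real n)) + gamma n c x
           \<le> 2 / real n * x + real n * c)"
proof -
  interpret GS n c using assms by unfold_locales
  have D: "\<forall>x\<ge>0. (gamma n c has_real_derivative g1f n c x) (at x within {0..})
            \<and> (g1f n c has_real_derivative g2f n c x) (at x within {0..})"
    using gamma_at_deriv g1_at_deriv by blast
  have C: "continuous_on {0..} (g2f n c)" by (rule g2_cont)
  have P: "\<forall>x\<ge>0.
        (2 * x * g2f n c x + g1f n c x \<le> 3 / (real n + 2)
           \<and> (2 * x * g2f n c x + g1f n c x = 3 / (real n + 2) \<longleftrightarrow> x = x0 n c))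
      \<and> ((gamma n c x + real n * c) * x * g1f n c x \<ge> 2 * c * x + (gamma n c x)\<^sup>2 - real n * c * gamma n c x
           \<and> ((gamma n c x + real n * c) * x * g1f n c x = 2 * c * x + (gamma n c x)\<^sup>2 - real n * c * gamma n c x
                \<longleftrightarrow> x \<ge> x0 n c))
      \<and> gamma n c x > x * g1f n c x
      \<and> gamma n c x = min (alpha n c x) (beta n c x)
      \<and> x / (real n - 1) + 2 * c < gamma n c x \<and> gamma n c x < x / (real n - 1) + real n * c
      \<and> (real n - 2) / sqrt (real n * (real n - 1)) * sqrt (x * (gamma n c x - x / real n)) + gamma n c x
           \<le> 2 / real n * x + real n * c"
    using pointwise by blast
  show ?thesis
    by (rule exI[of _ "g1f n c"], rule exI[of _ "g2f n c"]) (intro conjI D C P)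
qed


end
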